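(* Let $\pi\in\mathcal{S}_n$ be an arbitrary permutation. (a) For every $r\ge0$ and every $(i,j)\in\mathcal{E}_r(\pi)$ we have $i+j\le n+r$. (b) Let $(i,j)\in D(\pi)$ be a diagram square of rank $1$ such that $(i-1,j)\notin D(\pi)$ and $(i,j-1)\notin D(\pi)$. Then $\pi_{i-1}=j-1$. Furthermore, for any $(i,j)\in\mathcal{E}_1(\pi)$ there is no $(i',j')\in\mathcal{E}(\pi)$ with $i'<i$ and $j'<j$.
   Context: Represent $\pi\in\mathcal{S}_n$ by an $n\times n$ array, rows $i=1,\dots,n$ numbered top to bottom and columns $j=1,\dots,n$ left to right, with a dot in square $(i,\pi_i)$. The diagram $D(\pi)$ is the set of squares $(i,j)$ with $\pi_i>j$ and $\pi^{-1}(j)>i$; its elements are diagram squares. The essential set $\mathcal{E}(\pi)$ is the set of $(i,j)\in D(\pi)$ with $(i+1,j)\notin D(\pi)$ and $(i,j+1)\notin D(\pi)$ (squares outside the array count as not in $D(\pi)$). The rank of a square $(i,j)$ is $\rho(i,j)=\#\{k<i:\pi_k<j\}$ (number of dots strictly northwest), and $\mathcal{E}_r(\pi)=\{(i,j)\in\mathcal{E}(\pi):\rho(i,j)=r\}$. *)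

theory Defs
  imports "HOL-Combinatorics.Permutations"
begin

text \<open>A permutation pi of {1..n} is a function p :: nat => nat with p permutes {1..n};
  the dot of row i is in column p i. Squares are pairs (i,j), i = row, j = column.\<close>

definition diagram :: "(nat \<Rightarrow> nat) \<Rightarrow> nat \<Rightarrow> (nat \<times> nat) set" where
  "diagram p n = {(i,j). i \<in> {1..n} \<and> j \<in> {1..n} \<and> p i > j \<and> inv p j > i}"

definition rank :: "(nat \<Rightarrow> nat) \<Rightarrow> nat \<Rightarrow> nat \<Rightarrow> nat" where
  "rank p i j = card {k. 1 \<le> k \<and> k < i \<and> p k < j}"

definition essential :: "(nat \<Rightarrow> nat) \<Rightarrow> nat \<Rightarrow> (nat \<times> nat) set" where
  "essential p n = {(i,j). (i,j) \<in> diagram p n \<and> (i+1,j) \<notin> diagram p n \<and> (i,j+1) \<notin> diagram p n}"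

definition essential_r :: "(nat \<Rightarrow> nat) \<Rightarrow> nat \<Rightarrow> nat \<Rightarrow> (nat \<times> nat) set" where
  "essential_r p n r = {(i,j). (i,j) \<in> essential p n \<and> rank p i j = r}"

end

theory Submission
  imports Defs
begin

lemma partA:
  assumes P: "p permutes {1..n}" and D: "(i,j) \<in> diagram p n"
  shows "i + j \<le> n + rank p i j"
proof -
  have pi: "\<And>x. p (inv p x) = x" "\<And>x. inv p (p x) = x"
    using P permutes_inverses by metis+
  have inS: "\<And>x. (p x \<in> {1..n}) = (x \<in> {1..n})"
    by (rule permutes_in_image[OF P])
  have d: "i \<in> {1..n}" "j \<in> {1..n}" "p i > j" "inv p j > i" using D by (auto simp: diagram_def)
  define A where "A = {k. 1 \<le> k \<and> k < i \<and> p k < j}"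
  define B where "B = {k. 1 \<le> k \<and> k \<le> i \<and> p k > j}"
  have sub: "{1..i} \<subseteq> A \<union> B"
  proof
    fix k assume k: "k \<in> {1..i}"
    have "p k \<noteq> j" using d(4) k pi(2)[of k] by auto
    then show "k \<in> A \<union> B" using k d(3) unfolding A_def B_def
      by (cases "k = i") auto
  qed
  have fA: "finite A" unfolding A_def by auto
  have fB: "finite B" unfolding B_def by auto
  have "i \<le> card (A \<union> B)" using card_mono[OF _ sub] fA fB by auto
  also have "\<dots> \<le> card A + card B" by (rule card_Un_le)
  finally have 1: "i \<le> card A + card B" .
  have "inj_on p B" using P permutes_inj inj_on_subset by blast
  moreover have "p ` B \<subseteq> {j<..n}"
  proof
    fix y assume "y \<in> p ` B"
    then obtain k where k: "k \<in> B" "y = p k" by auto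
    have "k \<in> {1..n}" using k d(1) unfolding B_def by auto
    then have "p k \<in> {1..n}" using inS by blast
    then show "y \<in> {j<..n}" using k unfolding B_def by auto
  qed
  ultimately have "card B \<le> card {j<..n}" by (meson card_inj_on_le finite_greaterThanAtMost)
  then have "card B \<le> n - j" by simp
  moreover have "j \<le> n" using d(2) by simp
  ultimately show ?thesis using 1 unfolding rank_def A_def[symmetric] by linarith
qed

lemma partB1:
  assumes P: "p permutes {1..n}" and D: "(i,j) \<in> diagram p n" and R: "rank p i j = 1"
    and N1: "(i-1,j) \<notin> diagram p n" and N2: "(i,j-1) \<notin> diagram p n"
  shows "p (i-1) = j-1"
proof -
  have pi: "\<And>x. p (inv p x) = x" "\<And>x. inv p (p x) = x"
    using P permutes_inverses by metis+
  have inS: "\<And>x. (p x \<in> {1..n}) = (x \<in> {1..n})"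
    by (rule permutes_in_image[OF P])
  have inS2: "\<And>x. (inv p x \<in> {1..n}) = (x \<in> {1..n})"
    by (rule permutes_in_image[OF permutes_inv[OF P]])
  have d: "1 \<le> i" "i \<le> n" "1 \<le> j" "j \<le> n" "p i > j" "inv p j > i" using D by (auto simp: diagram_def)
  define S where "S = {k. 1 \<le> k \<and> k < i \<and> p k < j}"
  have cS: "card S = 1" using R unfolding rank_def S_def by simp
  then obtain a where Sa: "S = {a}" using card_1_singletonE by blast
  have i2: "i \<ge> 2"
  proof (rule ccontr)
    assume "\<not> i \<ge> 2" then have "S = {}" unfolding S_def by auto
    then show False using cS by simp
  qed
  have j2: "j \<ge> 2"
  proof (rule ccontr)
    assume nj: "\<not> j \<ge> 2"
    have "a \<in> S" using Sa by simp
    then have a: "1 \<le> a" "a < i" "p a < j" unfolding S_def by auto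
    then have "a \<in> {1..n}" using d(2) by simp
    then have "p a \<in> {1..n}" using inS by blast
    then show False using a nj by simp
  qed
  have ne: "p (i-1) \<noteq> j"
  proof
    assume "p (i-1) = j"
    then have "inv p j = i - 1" using pi(2)[of "i-1"] by simp
    then show False using d(6) by simp
  qed
  have "\<not> (p (i-1) > j \<and> inv p j > i-1)"
    using N1 d i2 unfolding diagram_def by auto
  then have f3: "p (i-1) < j" using ne d(6) by linarith
  have f1: "1 \<le> i - 1" using i2 by linarith
  have f2: "i - 1 < i" using i2 by linarith
  have "i - 1 \<in> S" unfolding S_def by (rule CollectI) (intro conjI f1 f2 f3)
  have jm: "j - 1 \<in> {1..n}" using d(4) j2 by auto
  have m1: "inv p (j-1) \<in> {1..n}" using jm inS2[of "j-1"] by blast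
  have ne2: "inv p (j-1) \<noteq> i"
  proof
    assume "inv p (j-1) = i"
    then have "p i = j - 1" using pi(1)[of "j-1"] by simp
    then show False using d(5) by simp
  qed
  have "\<not> (p i > j - 1 \<and> inv p (j-1) > i)"
    using N2 d j2 unfolding diagram_def by auto
  then have "inv p (j-1) < i" using ne2 d(5) by linarith
  moreover have "p (inv p (j-1)) < j" using pi(1)[of "j-1"] j2 by simp
  ultimately have "inv p (j-1) \<in> S" unfolding S_def using m1 by auto
  with \<open>i - 1 \<in> S\<close> Sa have "inv p (j-1) = i - 1" by auto
  then show ?thesis using pi(1)[of "j-1"] by metis
qed

lemma partB2:
  assumes P: "p permutes {1..n}" and E: "(i,j) \<in> essential_r p n 1"
    and E': "(i',j') \<in> essential p n" and lt: "i' < i" "j' < j"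
  shows False
proof -
  have pi: "\<And>x. p (inv p x) = x" "\<And>x. inv p (p x) = x"
    using P permutes_inverses by metis+
  have inS2: "\<And>x. (inv p x \<in> {1..n}) = (x \<in> {1..n})"
    by (rule permutes_in_image[OF permutes_inv[OF P]])
  have d: "i \<in> {1..n}" "j \<in> {1..n}" "p i > j" "inv p j > i" "rank p i j = 1"
    using E by (auto simp: diagram_def essential_r_def essential_def)
  have d': "i' \<in> {1..n}" "j' \<in> {1..n}" "p i' > j'" "inv p j' > i'"
    and n1: "(i'+1,j') \<notin> diagram p n" and n2: "(i',j'+1) \<notin> diagram p n"
    using E' by (auto simp: diagram_def essential_def)
  define S where "S = {k. 1 \<le> k \<and> k < i \<and> p k < j}"
  have cS: "card S = 1" using d(5) unfolding rank_def S_def by simp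
  then obtain a where Sa: "S = {a}" using card_1_singletonE by blast
  have "i' + 1 \<noteq> i"
  proof
    assume h: "i' + 1 = i"
    have "p (i'+1) \<le> j'"
    proof (rule ccontr)
      assume "\<not> p (i'+1) \<le> j'"
      then have "inv p j' \<le> i'+1" using n1 d d' h unfolding diagram_def by auto
      then have "inv p j' = i'+1" using d' by auto
      then show False using pi(1)[of j'] \<open>\<not> p (i'+1) \<le> j'\<close> by auto
    qed
    then show False using h d lt by auto
  qed
  then have i1: "i' + 1 < i" using lt by auto
  have "p (i'+1) \<le> j'"
  proof (rule ccontr)
    assume "\<not> p (i'+1) \<le> j'"
    then have "inv p j' \<le> i'+1" using n1 d d' i1 unfolding diagram_def by auto
    then have "inv p j' = i'+1" using d' by auto
    then show False using pi(1)[of j'] \<open>\<not> p (i'+1) \<le> j'\<close> by auto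
  qed
  then have A1: "i' + 1 \<in> S" unfolding S_def using i1 lt by auto
  have "j' + 1 \<noteq> j"
  proof
    assume h: "j' + 1 = j"
    have "inv p (j'+1) \<le> i'"
    proof (rule ccontr)
      assume "\<not> inv p (j'+1) \<le> i'"
      then have "p i' \<le> j'+1" using n2 d d' h unfolding diagram_def by auto
      then have "p i' = j'+1" using d' by auto
      then show False using pi(2)[of i'] \<open>\<not> inv p (j'+1) \<le> i'\<close> by auto
    qed
    then show False using h d lt by auto
  qed
  then have j1: "j' + 1 < j" using lt by auto
  have le: "inv p (j'+1) \<le> i'"
  proof (rule ccontr)
    assume "\<not> inv p (j'+1) \<le> i'"
    then have "p i' \<le> j'+1" using n2 d d' j1 unfolding diagram_def by auto
    then have "p i' = j'+1" using d' by auto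
    then show False using pi(2)[of i'] \<open>\<not> inv p (j'+1) \<le> i'\<close> by auto
  qed
  have jm: "j' + 1 \<in> {1..n}" using j1 d(2) by auto
  have "inv p (j'+1) \<in> {1..n}" using jm inS2[of "j'+1"] by blast
  then have A2: "inv p (j'+1) \<in> S" unfolding S_def using le lt j1 pi(1)[of "j'+1"] by auto
  from A1 A2 Sa le show False by auto
qed

theorem lemma2p2:
  fixes p :: "nat \<Rightarrow> nat" and n :: nat
  assumes "p permutes {1..n}"
  shows "(\<forall>r i j. (i,j) \<in> essential_r p n r \<longrightarrow> i + j \<le> n + r)
    \<and> (\<forall>i j. (i,j) \<in> diagram p n \<and> rank p i j = 1
          \<and> (i-1,j) \<notin> diagram p n \<and> (i,j-1) \<notin> diagram p n
          \<longrightarrow> p (i-1) = j-1)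
    \<and> (\<forall>i j. (i,j) \<in> essential_r p n 1 \<longrightarrow>
          \<not> (\<exists>i' j'. (i',j') \<in> essential p n \<and> i' < i \<and> j' < j))"
proof (intro conjI allI impI)
  fix r i j assume "(i,j) \<in> essential_r p n r"
  then have "(i,j) \<in> diagram p n" "rank p i j = r" by (auto simp: essential_r_def essential_def)
  then show "i + j \<le> n + r" using partA[OF assms] by blast
next
  fix i j assume h: "(i,j) \<in> diagram p n \<and> rank p i j = 1
          \<and> (i-1,j) \<notin> diagram p n \<and> (i,j-1) \<notin> diagram p n"
  then show "p (i-1) = j-1" using partB1[OF assms] by blast
next
  fix i j assume "(i,j) \<in> essential_r p n 1"
  then show "\<not> (\<exists>i' j'. (i',j') \<in> essential p n \<and> i' < i \<and> j' < j)"
    using partB2[OF assms] by blast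
qed

end
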